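(* Let $0<p<1$, $0\le r\le1$ with $p\ne r$, $m:=r/p>1$, $T\in\mathbb{N}$ and $k\in\mathbb{N}$. Let $(H_i)_{i\ge1}$ be i.i.d. with $\mathbb{P}(H>n)=\frac{r-p}{(1-p)m^n-(1-r)}$ for $n\ge0$, $H_0:=T$, $N_T:=\min\{i\ge1:H_i>T\}$. Define the $k$-sample node depths: conditionally on $\{N_T\ge k\}$, choose a subset of $k$ tips $s_0<s_1<\dots<s_{k-1}$ uniformly at random among the $\binom{N_T}{k}$ subsets of $\{0,\dots,N_T-1\}$ (independently of $(H_i)$ given $N_T$), and set $H_{k,0}:=T$ and $H_{k,i}:=\max\{H_{s_{i-1}+1},\dots,H_{s_i}\}$ for $1\le i<k$. For $y\in(0,1)$, define the Bernoulli$(y)$-sample node depths: take an independent copy $(\tilde H_i)_{i\ge1}$ of $(H_i)$ with $\tilde H_0:=T$, $\tilde N_T:=\min\{i\ge1:\tilde H_i>T\}$, select each tip $i\in\{0,\dots,\tilde N_T-1\}$ independently with probability $y$, let $K$ be the number of selected tips and $t_0<\dots<t_{K-1}$ the selected tips, and set $H_{y,0}:=T$, $H_{y,i}:=\max\{\tilde H_{t_{i-1}+1},\dots,\tilde H_{t_i}\}$ for $1\le i<K$. Let $$\mu_k(\mathrm{d}y):=\frac{k\,\delta_T\,y^{k-1}}{\bigl(1-(1-\delta_T)(1-y)\bigr)^{k+1}}\,\mathrm{d}y,\qquad y\in(0,1),\qquad \delta_T:=\mathbb{P}(H>T).$$ Then for all $x_0=T$ and $x_1,\dots,x_{k-1}\in\{1,2,\dots,T\}$,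 $$\mathbb{P}(H_{k,0}=x_0,\dots,H_{k,k-1}=x_{k-1}\mid N_T\ge k)=\int_0^1\mu_k(\mathrm{d}y)\,\mathbb{P}(H_{y,0}=x_0,\dots,H_{y,k-1}=x_{k-1}\mid K=k).$$
   Context: The sequence $(H_i)_{i\ge1}$ is the coalescent point process of a Bienaymé–Galton–Watson process with $(p,r)$-linear fractional offspring law $\mathbb{P}(\xi=0)=1-r$, $\mathbb{P}(\xi=k)=rp(1-p)^{k-1}$ ($k\ge1$): $H_i$ is the coalescent time of consecutive tips $i-1,i$, and the coalescent time of tips $i<j$ is $\max\{H_{i+1},\dots,H_j\}$. The CPP$(T)$ tree has tips $0,\dots,N_T-1$ with node depths $H_0=T,H_1,\dots,H_{N_T-1}$. $H_{k,i}$ (resp. $H_{y,i}$) is the coalescent time between the $(i-1)$-th and $i$-th sampled tips. $\mu_k$ is a probability measure on $(0,1)$. *)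

theory Defs
  imports "HOL-Probability.Probability"
begin

definition tailH :: "real \<Rightarrow> real \<Rightarrow> nat \<Rightarrow> real" where
  "tailH p r n = (r - p) / ((1 - p) * (r / p) ^ n - (1 - r))"

text \<open>N_T = min {i >= 1 : H_i > T} (H_0 := T is implicit).\<close>
definition NT :: "(nat \<Rightarrow> 'a \<Rightarrow> nat) \<Rightarrow> nat \<Rightarrow> 'a \<Rightarrow> nat" where
  "NT H T \<omega> = (LEAST i. 1 \<le> i \<and> T < H i \<omega>)"

definition sample_depths :: "(nat \<Rightarrow> nat) \<Rightarrow> nat \<Rightarrow> nat set \<Rightarrow> nat list" where
  "sample_depths h T S =
     (let s = sorted_list_of_set S
      in map (\<lambda>i. if i = 0 then T else Max (h ` {s ! (i - 1)<..s ! i})) [0..<card S])"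

text \<open>Joint law of (randomness of the H's, k-sample of tips): given \<omega>, a uniformly random
  k-subset of {0,...,N_T-1} (only defined meaningfully on {N_T >= k}).\<close>
definition k_sample :: "'a measure \<Rightarrow> (nat \<Rightarrow> 'a \<Rightarrow> nat) \<Rightarrow> nat \<Rightarrow> nat \<Rightarrow> ('a \<times> nat set) measure" where
  "k_sample M H T k =
     M \<bind> (\<lambda>\<omega>. distr
        (measure_pmf (if k \<le> NT H T \<omega>
                      then pmf_of_set {S. S \<subseteq> {0..<NT H T \<omega>} \<and> card S = k}
                      else return_pmf {}))
        (M \<Otimes>\<^sub>M count_space UNIV) (\<lambda>S. (\<omega>, S)))"

definition bern_sample :: "'a measure \<Rightarrow> (nat \<Rightarrow> 'a \<Rightarrow> nat) \<Rightarrow> nat \<Rightarrow> real \<Rightarrow> ('a \<times> nat set) measure" where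
  "bern_sample M H T y =
     M \<bind> (\<lambda>\<omega>. distr
        (measure_pmf (map_pmf (\<lambda>f. {i. f i}) (Pi_pmf {0..<NT H T \<omega>} False (\<lambda>_. bernoulli_pmf y))))
        (M \<Otimes>\<^sub>M count_space UNIV) (\<lambda>S. (\<omega>, S)))"

definition mu :: "nat \<Rightarrow> real \<Rightarrow> real measure" where
  "mu k \<delta> = density lborel
     (\<lambda>y. ennreal (indicator {0<..<1} y * (real k * \<delta> * y ^ (k - 1) / (1 - (1 - \<delta>) * (1 - y)) ^ (k + 1))))"

end

theory Submission
  imports Defs "HOL-Analysis.Analysis"
begin



lemma negbin_sums:
  fixes z :: real and k :: nat
  assumes "\<bar>z\<bar> < 1"
  shows "(\<lambda>n. real (n choose k) * z ^ (n - k)) sums (1 / (1 - z) ^ (k + 1))"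
proof -
  have 1: "(\<lambda>n. ((- real (k+1)) gchoose n) * (-z)^n) sums (1 + (-z)) powr (- real (k+1))"
    by (rule gen_binomial_real) (use assms in simp)
  have eq: "(\<lambda>n. ((- real (k+1)) gchoose n) * (-z)^n) = (\<lambda>n. real ((n + k) choose k) * z ^ (n + k - k))"
  proof
    fix n
    have "((- real (k+1)) gchoose n) = (-1)^n * ((real (k+1) + real n - 1) gchoose n)"
      by (rule gbinomial_minus)
    also have "real (k+1) + real n - 1 = real (n + k)" by simp
    also have "(real (n + k) gchoose n) = real ((n+k) choose n)" by (simp only: binomial_gbinomial)
    also have "(n+k) choose n = (n+k) choose k" by (metis add_diff_cancel_left' binomial_symmetric le_add2 add.commute)
    finally have "((- real (k+1)) gchoose n) = (-1)^n * real ((n + k) choose k)" .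
    moreover have "(-z)^n = (-1)^n * z^n" by (rule power_minus)
    ultimately show "((- real (k+1)) gchoose n) * (-z)^n = real ((n + k) choose k) * z ^ (n + k - k)"
      by (simp add: power_mult_distrib[symmetric])
  qed
  have v: "(1 + (-z)) powr (- real (k+1)) = 1 / (1 - z) ^ (k + 1)"
  proof -
    have "1 - z > 0" using assms by simp
    hence "(1 - z) powr (- real (k+1)) = 1 / (1 - z) powr (real (k+1))" by (metis powr_minus_divide)
    also have "(1 - z) powr (real (k+1)) = (1 - z) ^ (k+1)" using \<open>1 - z > 0\<close> by (rule powr_realpow)
    finally show ?thesis by simp
  qed
  have 2: "(\<lambda>n. real ((n + k) choose k) * z ^ (n + k - k)) sums (1 / (1 - z) ^ (k + 1))"
    using 1 unfolding eq v .
  have "(\<lambda>i. real ((i + k) choose k) * z ^ (i + k - k)) sums s \<longleftrightarrow>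
      (\<lambda>i. real (i choose k) * z ^ (i - k)) sums s" for s
    by (rule sums_zero_iff_shift[where f = "\<lambda>n. real (n choose k) * z ^ (n - k)"]) auto
  with 2 show ?thesis by blast
qed


lemma beta_nn:
  fixes k n :: nat
  assumes "1 \<le> k" "k \<le> n"
  shows "(\<integral>\<^sup>+y. ennreal (indicator {0<..<1} y * (y ^ (k - 1) * (1 - y) ^ (n - k))) \<partial>lborel)
         = ennreal (1 / (real k * real (n choose k)))"
proof -
  have B0: "((\<lambda>t. t powr (real k - 1) * (1 - t) powr (real (n - k + 1) - 1)) has_integral Beta (real k) (real (n-k+1))) {0..1}"
    by (rule has_integral_Beta_real) (use assms in auto)
  have B: "((\<lambda>t. t powr (real k - 1) * (1 - t) powr (real (n - k + 1) - 1)) has_integral Beta (real k) (real (n-k+1))) {0<..<1}"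
    using B0 by (simp only: has_integral_Icc_iff_Ioo)
  have "((\<lambda>t. t ^ (k - 1) * (1 - t) ^ (n - k)) has_integral Beta (real k) (real (n-k+1))) {0<..<1}"
  proof (rule has_integral_spike_finite[OF _ _ B, where S = "{}"])
    fix t :: real assume "t \<in> {0<..<1} - {}"
    hence t: "0 < t" "t < 1" by auto
    have e1: "real k - 1 = real (k - 1)" using assms by (simp add: of_nat_diff)
    have e2: "real (n - k + 1) - 1 = real (n - k)" by simp
    have "t powr (real k - 1) = t ^ (k - 1)" unfolding e1 using t(1) by (rule powr_realpow)
    moreover have "(1 - t) powr (real (n - k + 1) - 1) = (1-t) ^ (n - k)" unfolding e2 using t by (intro powr_realpow) simp
    ultimately show "t ^ (k - 1) * (1 - t) ^ (n - k) = t powr (real k - 1) * (1 - t) powr (real (n - k + 1) - 1)" by simp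
  qed auto
  from nn_integral_has_integral_lebesgue[OF _ this]
  have I: "(\<integral>\<^sup>+y. ennreal (indicator {0<..<1} y * (y ^ (k - 1) * (1 - y) ^ (n - k))) \<partial>lborel) = Beta (real k) (real (n-k+1))"
    by simp
  have "Beta (real k) (real (n-k+1)) = fact (k-1) * fact (n-k) / fact n"
  proof -
    have g1: "Gamma (real k) = fact (k-1)" using Gamma_fact[of "k-1"] assms by (simp add: of_nat_diff)
    have g2: "Gamma (1 + real (n-k)) = fact (n-k)" using Gamma_fact[of "n-k"] by simp
    have e: "real k + (1 + real (n-k)) = 1 + real n" using assms by (simp add: of_nat_diff)
    have g3: "Gamma (real k + (1 + real (n-k))) = fact n" unfolding e by (rule Gamma_fact)
    show ?thesis by (simp add: Beta_def g1 g2 g3)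
  qed
  also have "\<dots> = 1 / (real k * real (n choose k))"
  proof -
    have "real (n choose k) = fact n / (fact k * fact (n-k))" using assms by (simp add: binomial_fact)
    moreover have "fact k = real k * fact (k-1)" using assms by (intro fact_reduce) simp
    ultimately have C: "real (n choose k) = fact n / (real k * fact (k-1) * fact (n-k))" by simp
    have gen: "a * b / c = 1 / (kk * (c / (kk * a * b)))" if "a > 0" "b > 0" "c > 0" "kk > 0" for a b c kk :: real
      using that by (simp add: field_simps)
    show ?thesis unfolding C using assms by (intro gen) auto
  qed
  finally have b: "Beta (real k) (real (n-k+1)) = 1 / (real k * real (n choose k))" .
  show ?thesis unfolding I b ..
qed


lemma pair_meas_pmf:
  assumes "\<omega> \<in> space M"
  shows "(\<lambda>S. (\<omega>, S)) \<in> measurable (measure_pmf P) (M \<Otimes>\<^sub>M (count_space UNIV :: nat set measure))"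
  using assms by (auto simp: measurable_def space_pair_measure)

lemma emeasure_kernel:
  fixes P :: "nat set pmf"
  assumes "\<omega> \<in> space M" "finite F" "set_pmf P \<subseteq> F"
    and X: "X \<in> sets (M \<Otimes>\<^sub>M (count_space UNIV :: nat set measure))"
  shows "emeasure (distr (measure_pmf P) (M \<Otimes>\<^sub>M count_space UNIV) (\<lambda>S. (\<omega>, S))) X
       = (\<Sum>S\<in>F. indicator X (\<omega>, S) * ennreal (pmf P S))"
proof -
  have "emeasure (distr (measure_pmf P) (M \<Otimes>\<^sub>M count_space UNIV) (\<lambda>S. (\<omega>, S))) X
      = emeasure (measure_pmf P) ((\<lambda>S. (\<omega>, S)) -` X \<inter> space (measure_pmf P))"
    by (rule emeasure_distr[OF pair_meas_pmf[OF assms(1)] X])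
  also have "\<dots> = (\<integral>\<^sup>+S. indicator ((\<lambda>S. (\<omega>, S)) -` X \<inter> space (measure_pmf P)) S \<partial>measure_pmf P)"
    by (rule nn_integral_indicator[symmetric]) simp
  also have "\<dots> = (\<Sum>S\<in>F. indicator ((\<lambda>S. (\<omega>, S)) -` X \<inter> space (measure_pmf P)) S * ennreal (pmf P S))"
    by (rule nn_integral_measure_pmf_support) (use assms in auto)
  also have "\<dots> = (\<Sum>S\<in>F. indicator X (\<omega>, S) * ennreal (pmf P S))"
    by (intro sum.cong) (auto simp: indicator_def)
  finally show ?thesis .
qed

lemma kernel_meas:
  fixes M :: "'a measure" and N :: "'a \<Rightarrow> nat" and Q :: "nat \<Rightarrow> nat set pmf"
  assumes Nm: "N \<in> measurable M (count_space UNIV)"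
    and supp: "\<And>n. set_pmf (Q n) \<subseteq> Pow {0..<n}"
  shows "(\<lambda>\<omega>. distr (measure_pmf (Q (N \<omega>))) (M \<Otimes>\<^sub>M count_space UNIV) (\<lambda>S. (\<omega>, S)))
          \<in> measurable M (subprob_algebra (M \<Otimes>\<^sub>M (count_space UNIV :: nat set measure)))"
proof -
  let ?C = "count_space UNIV :: nat set measure"
  define K where "K n \<omega> = distr (measure_pmf (Q n)) (M \<Otimes>\<^sub>M ?C) (\<lambda>S. (\<omega>, S))" for n \<omega>
  have pm: "(\<lambda>\<omega>. (\<omega>, S)) \<in> measurable M (M \<Otimes>\<^sub>M ?C)" for S
    by (rule measurable_Pair2') simp
  have Kn: "(\<lambda>\<omega>. K n \<omega>) \<in> measurable M (subprob_algebra (M \<Otimes>\<^sub>M ?C))" for n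
  proof (rule measurable_subprob_algebra)
    fix \<omega> assume \<omega>: "\<omega> \<in> space M"
    show "subprob_space (K n \<omega>)" unfolding K_def
      by (rule prob_space_imp_subprob_space, rule prob_space.prob_space_distr[OF prob_space_measure_pmf pair_meas_pmf[OF \<omega>]])
    show "sets (K n \<omega>) = sets (M \<Otimes>\<^sub>M ?C)" unfolding K_def by simp
  next
    fix A assume A: "A \<in> sets (M \<Otimes>\<^sub>M ?C)"
    have "(\<lambda>\<omega>. \<Sum>S\<in>Pow {0..<n}. indicator A (\<omega>, S) * ennreal (pmf (Q n) S)) \<in> borel_measurable M"
    proof (intro borel_measurable_sum borel_measurable_times_ennreal borel_measurable_const)
      fix S show "(\<lambda>\<omega>. indicator A (\<omega>, S) :: ennreal) \<in> borel_measurable M"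
        using measurable_comp[OF pm borel_measurable_indicator[OF A]] by (simp add: comp_def)
    qed
    moreover have "emeasure (K n \<omega>) A = (\<Sum>S\<in>Pow {0..<n}. indicator A (\<omega>, S) * ennreal (pmf (Q n) S))"
      if "\<omega> \<in> space M" for \<omega>
      unfolding K_def by (rule emeasure_kernel) (use supp A that in auto)
    ultimately show "(\<lambda>\<omega>. emeasure (K n \<omega>) A) \<in> borel_measurable M"
      by (subst measurable_cong) auto
  qed
  have Km: "(\<lambda>\<omega>. K (N \<omega>) \<omega>) \<in> measurable M (subprob_algebra (M \<Otimes>\<^sub>M ?C))"
    by (rule measurable_compose_countable'[OF Kn Nm]) simp
  thus ?thesis unfolding K_def .
qed

lemma bind_formula:
  fixes M :: "'a measure" and N :: "'a \<Rightarrow> nat" and Q :: "nat \<Rightarrow> nat set pmf"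
  assumes ne: "space M \<noteq> {}"
    and Nm: "N \<in> measurable M (count_space UNIV)"
    and supp: "\<And>n. set_pmf (Q n) \<subseteq> Pow {0..<n}"
    and X: "X \<in> sets (M \<Otimes>\<^sub>M (count_space UNIV :: nat set measure))"
  shows "emeasure (M \<bind> (\<lambda>\<omega>. distr (measure_pmf (Q (N \<omega>))) (M \<Otimes>\<^sub>M count_space UNIV) (\<lambda>S. (\<omega>, S)))) X
     = (\<Sum>n. \<Sum>S\<in>Pow {0..<n}. ennreal (pmf (Q n) S) * emeasure M {\<omega>\<in>space M. N \<omega> = n \<and> (\<omega>, S) \<in> X})"
proof -
  let ?C = "count_space UNIV :: nat set measure"
  define K where "K n \<omega> = distr (measure_pmf (Q n)) (M \<Otimes>\<^sub>M ?C) (\<lambda>S. (\<omega>, S))" for n \<omega>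
  have pm: "(\<lambda>\<omega>. (\<omega>, S)) \<in> measurable M (M \<Otimes>\<^sub>M ?C)" for S
    by (rule measurable_Pair2') simp
  have Km: "(\<lambda>\<omega>. K (N \<omega>) \<omega>) \<in> measurable M (subprob_algebra (M \<Otimes>\<^sub>M ?C))"
    unfolding K_def by (rule kernel_meas[OF Nm supp])
  have "emeasure (M \<bind> (\<lambda>\<omega>. K (N \<omega>) \<omega>)) X = (\<integral>\<^sup>+\<omega>. emeasure (K (N \<omega>) \<omega>) X \<partial>M)"
    by (rule emeasure_bind[OF ne Km X])
  also have "\<dots> = (\<integral>\<^sup>+\<omega>. (\<Sum>n. indicator {\<omega>\<in>space M. N \<omega> = n} \<omega> *
        (\<Sum>S\<in>Pow {0..<n}. ennreal (pmf (Q n) S) * indicator {\<omega>\<in>space M. N \<omega> = n \<and> (\<omega>, S) \<in> X} \<omega>)) \<partial>M)"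
  proof (rule nn_integral_cong)
    fix \<omega> assume \<omega>: "\<omega> \<in> space M"
    let ?f = "\<lambda>n. indicator {\<omega>\<in>space M. N \<omega> = n} \<omega> *
        (\<Sum>S\<in>Pow {0..<n}. ennreal (pmf (Q n) S) * indicator {\<omega>\<in>space M. N \<omega> = n \<and> (\<omega>, S) \<in> X} \<omega>)"
    have "(\<Sum>n. ?f n) = (\<Sum>n\<in>{N \<omega>}. ?f n)"
      by (rule suminf_finite) (auto simp: indicator_def)
    also have "\<dots> = (\<Sum>S\<in>Pow {0..<N \<omega>}. ennreal (pmf (Q (N \<omega>)) S) * indicator {\<omega>\<in>space M. N \<omega> = N \<omega> \<and> (\<omega>, S) \<in> X} \<omega>)"
      using \<omega> by simp
    also have "\<dots> = (\<Sum>S\<in>Pow {0..<N \<omega>}. indicator X (\<omega>, S) * ennreal (pmf (Q (N \<omega>)) S))"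
      by (rule sum.cong) (use \<omega> in \<open>auto simp: indicator_def\<close>)
    also have "\<dots> = emeasure (K (N \<omega>) \<omega>) X"
      unfolding K_def by (rule emeasure_kernel[symmetric]) (use supp X \<omega> in auto)
    finally show "emeasure (K (N \<omega>) \<omega>) X = (\<Sum>n. ?f n)" by (rule sym)
  qed
  also have "\<dots> = (\<Sum>n. \<integral>\<^sup>+\<omega>. indicator {\<omega>\<in>space M. N \<omega> = n} \<omega> *
        (\<Sum>S\<in>Pow {0..<n}. ennreal (pmf (Q n) S) * indicator {\<omega>\<in>space M. N \<omega> = n \<and> (\<omega>, S) \<in> X} \<omega>) \<partial>M)"
  proof (rule nn_integral_suminf)
    have s1: "{\<omega>\<in>space M. N \<omega> = n} \<in> sets M" for n
      using measurable_sets[OF Nm, of "{n}"] by (simp add: vimage_def Int_def conj_commute)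
    have s2: "{\<omega>\<in>space M. N \<omega> = n \<and> (\<omega>, S) \<in> X} \<in> sets M" for n S
    proof -
      have "{\<omega>\<in>space M. N \<omega> = n \<and> (\<omega>, S) \<in> X} = {\<omega>\<in>space M. N \<omega> = n} \<inter> ((\<lambda>\<omega>. (\<omega>, S)) -` X \<inter> space M)"
        by auto
      thus ?thesis using s1 measurable_sets[OF pm X] by simp
    qed
    fix n show "(\<lambda>\<omega>. indicator {\<omega>\<in>space M. N \<omega> = n} \<omega> *
        (\<Sum>S\<in>Pow {0..<n}. ennreal (pmf (Q n) S) * indicator {\<omega>\<in>space M. N \<omega> = n \<and> (\<omega>, S) \<in> X} \<omega>)) \<in> borel_measurable M"
      using s1 s2 by measurable
  qed
  also have "\<dots> = (\<Sum>n. \<Sum>S\<in>Pow {0..<n}. ennreal (pmf (Q n) S) * emeasure M {\<omega>\<in>space M. N \<omega> = n \<and> (\<omega>, S) \<in> X})"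
  proof (rule suminf_cong)
    fix n
    have s2: "{\<omega>\<in>space M. N \<omega> = n \<and> (\<omega>, S) \<in> X} \<in> sets M" for S
    proof -
      have s1: "{\<omega>\<in>space M. N \<omega> = n} \<in> sets M"
        using measurable_sets[OF Nm, of "{n}"] by (simp add: vimage_def Int_def conj_commute)
      have "{\<omega>\<in>space M. N \<omega> = n \<and> (\<omega>, S) \<in> X} = {\<omega>\<in>space M. N \<omega> = n} \<inter> ((\<lambda>\<omega>. (\<omega>, S)) -` X \<inter> space M)"
        by auto
      thus ?thesis using s1 measurable_sets[OF pm X] by simp
    qed
    have "(\<integral>\<^sup>+\<omega>. indicator {\<omega>\<in>space M. N \<omega> = n} \<omega> *
        (\<Sum>S\<in>Pow {0..<n}. ennreal (pmf (Q n) S) * indicator {\<omega>\<in>space M. N \<omega> = n \<and> (\<omega>, S) \<in> X} \<omega>) \<partial>M)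
      = (\<integral>\<^sup>+\<omega>. (\<Sum>S\<in>Pow {0..<n}. ennreal (pmf (Q n) S) * indicator {\<omega>\<in>space M. N \<omega> = n \<and> (\<omega>, S) \<in> X} \<omega>) \<partial>M)"
      by (intro nn_integral_cong) (auto simp: indicator_def)
    also have "\<dots> = (\<Sum>S\<in>Pow {0..<n}. \<integral>\<^sup>+\<omega>. ennreal (pmf (Q n) S) * indicator {\<omega>\<in>space M. N \<omega> = n \<and> (\<omega>, S) \<in> X} \<omega> \<partial>M)"
      by (rule nn_integral_sum) (use s2 in measurable)
    also have "\<dots> = (\<Sum>S\<in>Pow {0..<n}. ennreal (pmf (Q n) S) * emeasure M {\<omega>\<in>space M. N \<omega> = n \<and> (\<omega>, S) \<in> X})"
      by (intro sum.cong refl, subst nn_integral_cmult) (use s2 in auto)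
    finally show "(\<integral>\<^sup>+\<omega>. indicator {\<omega>\<in>space M. N \<omega> = n} \<omega> *
        (\<Sum>S\<in>Pow {0..<n}. ennreal (pmf (Q n) S) * indicator {\<omega>\<in>space M. N \<omega> = n \<and> (\<omega>, S) \<in> X} \<omega>) \<partial>M)
      = (\<Sum>S\<in>Pow {0..<n}. ennreal (pmf (Q n) S) * emeasure M {\<omega>\<in>space M. N \<omega> = n \<and> (\<omega>, S) \<in> X})" .
  qed
  finally show ?thesis unfolding K_def .
qed
lemma bind_formula_real:
  fixes M :: "'a measure" and N :: "'a \<Rightarrow> nat" and Q :: "nat \<Rightarrow> nat set pmf"
  assumes PS: "prob_space M"
    and Nm: "N \<in> measurable M (count_space UNIV)"
    and supp: "\<And>n. set_pmf (Q n) \<subseteq> Pow {0..<n}"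
    and X: "X \<in> sets (M \<Otimes>\<^sub>M (count_space UNIV :: nat set measure))"
  shows "(\<lambda>n. \<Sum>S\<in>Pow {0..<n}. pmf (Q n) S * measure M {\<omega>\<in>space M. N \<omega> = n \<and> (\<omega>, S) \<in> X})
     sums measure (M \<bind> (\<lambda>\<omega>. distr (measure_pmf (Q (N \<omega>))) (M \<Otimes>\<^sub>M count_space UNIV) (\<lambda>S. (\<omega>, S)))) X"
proof -
  interpret prob_space M by (rule PS)
  let ?B = "M \<bind> (\<lambda>\<omega>. distr (measure_pmf (Q (N \<omega>))) (M \<Otimes>\<^sub>M count_space UNIV) (\<lambda>S. (\<omega>, S)))"
  define t where "t n = (\<Sum>S\<in>Pow {0..<n}. pmf (Q n) S * measure M {\<omega>\<in>space M. N \<omega> = n \<and> (\<omega>, S) \<in> X})" for n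
  have t0: "0 \<le> t n" for n unfolding t_def by (intro sum_nonneg mult_nonneg_nonneg) auto
  have "emeasure ?B X = (\<Sum>n. \<Sum>S\<in>Pow {0..<n}. ennreal (pmf (Q n) S) * emeasure M {\<omega>\<in>space M. N \<omega> = n \<and> (\<omega>, S) \<in> X})"
    by (rule bind_formula[OF not_empty Nm supp X])
  also have "\<dots> = (\<Sum>n. ennreal (t n))"
    unfolding t_def
    by (intro suminf_cong, subst sum_ennreal[symmetric])
       (auto intro!: sum.cong simp: emeasure_eq_measure ennreal_mult'')
  finally have E: "emeasure ?B X = (\<Sum>n. ennreal (t n))" .
  have "subprob_space ?B"
    by (rule subprob_space_bind[OF prob_space_imp_subprob_space[OF PS] kernel_meas[OF Nm supp]])
  hence fin: "emeasure ?B X \<noteq> top" by (rule subprob_space.emeasure_subprob_space_less_top)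
  have sm: "summable t" using fin unfolding E by (intro summable_suminf_not_top t0)
  have "emeasure ?B X = ennreal (suminf t)" unfolding E by (rule suminf_ennreal2[OF t0 sm])
  hence "measure ?B X = suminf t" unfolding measure_def by (simp add: suminf_nonneg[OF sm t0])
  thus ?thesis using sm unfolding t_def[symmetric] by (simp add: summable_sums)
qed


lemma NT_law:
  fixes M :: "'a measure" and H :: "nat \<Rightarrow> 'a \<Rightarrow> nat" and T :: nat
  assumes PS: "prob_space M"
    and ind: "prob_space.indep_vars M (\<lambda>_. count_space UNIV) H {1..}"
    and same: "\<And>i. 1 \<le> i \<Longrightarrow> measure M {\<omega>\<in>space M. T < H i \<omega>} = \<delta>"
    and dpos: "0 < \<delta>"
  shows "NT H T \<in> measurable M (count_space UNIV)"
    and "measure M {\<omega>\<in>space M. NT H T \<omega> = n} = (if n = 0 then 0 else \<delta> * (1 - \<delta>) ^ (n - 1))"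
proof -
  interpret prob_space M by (rule PS)
  have Hm: "H i \<in> measurable M (count_space UNIV)" if "1 \<le> i" for i
    using ind that unfolding indep_vars_def by auto
  have predH: "Measurable.pred M (\<lambda>\<omega>. 1 \<le> i \<and> T < H i \<omega>)" for i
  proof (cases "1 \<le> i")
    case True
    note [measurable] = Hm[OF True]
    show ?thesis by measurable
  qed simp
  show NTm: "NT H T \<in> measurable M (count_space UNIV)"
    unfolding NT_def[abs_def] by (rule measurable_Least) (rule predH)
  have predH2: "Measurable.pred M (\<lambda>\<omega>. 1 \<le> i \<longrightarrow> H i \<omega> \<le> T)" for i
  proof (cases "1 \<le> i")
    case True
    note [measurable] = Hm[OF True]
    show ?thesis by measurable
  qed simp
  have sH: "{\<omega>\<in>space M. T < H i \<omega>} \<in> sets M" "{\<omega>\<in>space M. H i \<omega> \<le> T} \<in> sets M" if "1 \<le> i" for i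
  proof -
    note [measurable] = Hm[OF that]
    show "{\<omega>\<in>space M. T < H i \<omega>} \<in> sets M" by measurable
    show "{\<omega>\<in>space M. H i \<omega> \<le> T} \<in> sets M" by measurable
  qed
  have le: "prob {\<omega>\<in>space M. H i \<omega> \<le> T} = 1 - \<delta>" if "1 \<le> i" for i
  proof -
    have "{\<omega>\<in>space M. H i \<omega> \<le> T} = space M - {\<omega>\<in>space M. T < H i \<omega>}" by auto
    thus ?thesis using prob_compl[OF sH(1)[OF that]] same[OF that] by simp
  qed
  have prodf: "prob {\<omega>\<in>space M. \<forall>i\<in>{1..n}. H i \<omega> \<in> A i} = (\<Prod>i\<in>{1..n}. prob {\<omega>\<in>space M. H i \<omega> \<in> A i})"
    if "1 \<le> n" for n A
  proof -
    have "prob (\<Inter>i\<in>{1..n}. H i -` A i \<inter> space M) = (\<Prod>i\<in>{1..n}. prob (H i -` A i \<inter> space M))"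
      by (rule indep_varsD[OF ind]) (use that in auto)
    moreover have "(\<Inter>i\<in>{1..n}. H i -` A i \<inter> space M) = {\<omega>\<in>space M. \<forall>i\<in>{1..n}. H i \<omega> \<in> A i}"
      using that by auto
    moreover have "H i -` A i \<inter> space M = {\<omega>\<in>space M. H i \<omega> \<in> A i}" for i by auto
    ultimately show ?thesis by simp
  qed
  define Z where "Z = {\<omega>\<in>space M. \<forall>i. 1 \<le> i \<longrightarrow> H i \<omega> \<le> T}"
  have Zs: "Z \<in> sets M" unfolding Z_def using predH2 by measurable
  have Z0: "prob Z = 0"
  proof (rule ccontr)
    assume "prob Z \<noteq> 0"
    hence "prob Z > 0" using measure_nonneg[of M Z] by linarith
    then obtain m where m: "(1 - \<delta>) ^ m < prob Z" using real_arch_pow_inv[of "prob Z" "1 - \<delta>"] dpos by auto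
    have "prob Z \<le> prob {\<omega>\<in>space M. \<forall>i\<in>{1..Suc m}. H i \<omega> \<in> {..T}}"
      by (rule finite_measure_mono) (auto simp: Z_def intro!: sets.sets_Collect_finite_All sH)
    also have "\<dots> = (\<Prod>i\<in>{1..Suc m}. prob {\<omega>\<in>space M. H i \<omega> \<in> {..T}})" by (rule prodf) simp
    also have "\<dots> = (1 - \<delta>) ^ Suc m" using le by simp
    also have "\<dots> \<le> (1 - \<delta>) ^ m"
    proof -
      have "\<delta> = prob {\<omega>\<in>space M. T < H 1 \<omega>}" using same[of 1] by simp
      also have "\<dots> \<le> 1" by (rule prob_le_1)
      finally have "0 \<le> 1 - \<delta>" by simp
      moreover have "1 - \<delta> \<le> 1" using dpos by simp
      ultimately show ?thesis by (simp add: mult_left_le_one_le)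
    qed
    finally show False using m by simp
  qed
  show "measure M {\<omega>\<in>space M. NT H T \<omega> = n} = (if n = 0 then 0 else \<delta> * (1 - \<delta>) ^ (n - 1))"
  proof (cases "n = 0")
    case True
    have "{\<omega>\<in>space M. NT H T \<omega> = 0} \<subseteq> Z"
    proof
      fix \<omega> assume w: "\<omega> \<in> {\<omega>\<in>space M. NT H T \<omega> = 0}"
      have "H i \<omega> \<le> T" if "1 \<le> i" for i
      proof (rule ccontr)
        assume "\<not> H i \<omega> \<le> T"
        hence "1 \<le> NT H T \<omega>" unfolding NT_def using that by (metis (mono_tags, lifting) LeastI not_le)
        thus False using w by simp
      qed
      thus "\<omega> \<in> Z" using w by (auto simp: Z_def)
    qed
    hence "prob {\<omega>\<in>space M. NT H T \<omega> = 0} \<le> prob Z"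
      by (intro finite_measure_mono Zs)
    thus ?thesis using True Z0 measure_nonneg[of M "{\<omega>\<in>space M. NT H T \<omega> = 0}"] by simp
  next
    case False
    define A where "A i = (if i < n then {..T} else {T<..})" for i
    define G where "G = {\<omega>\<in>space M. \<forall>i\<in>{1..n}. H i \<omega> \<in> A i}"
    have Gs: "G \<in> sets M" unfolding G_def A_def
      by (intro sets.sets_Collect_finite_All) (auto intro: sH)
    have NTs: "{\<omega>\<in>space M. NT H T \<omega> = n} \<in> sets M"
      using measurable_sets[OF NTm, of "{n}"] by (simp add: vimage_def Int_def conj_commute)
    have GN: "G \<subseteq> {\<omega>\<in>space M. NT H T \<omega> = n}"
    proof
      fix \<omega> assume "\<omega> \<in> G"
      hence w0: "\<omega> \<in> space M" "\<forall>i\<in>{1..n}. H i \<omega> \<in> A i" by (auto simp: G_def)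
      have w2: "H i \<omega> \<le> T" if "1 \<le> i" "i < n" for i
        using bspec[OF w0(2), of i] that by (simp add: A_def)
      have w3: "T < H n \<omega>" using bspec[OF w0(2), of n] False by (simp add: A_def)
      note w = w0(1) w2 w3
      have "NT H T \<omega> = n" unfolding NT_def
      proof (rule Least_equality)
        show "1 \<le> n \<and> T < H n \<omega>" using False w by simp
        fix y assume "1 \<le> y \<and> T < H y \<omega>" thus "n \<le> y" using w(2) by (meson not_le)
      qed
      thus "\<omega> \<in> {\<omega>\<in>space M. NT H T \<omega> = n}" using w by simp
    qed
    have NG: "{\<omega>\<in>space M. NT H T \<omega> = n} \<subseteq> G \<union> Z"
    proof
      fix \<omega> assume w: "\<omega> \<in> {\<omega>\<in>space M. NT H T \<omega> = n}"
      show "\<omega> \<in> G \<union> Z"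
      proof (cases "\<omega> \<in> Z")
        case False
        then obtain j where j: "1 \<le> j" "T < H j \<omega>" using w by (auto simp: Z_def not_le)
        hence ex: "\<exists>j. 1 \<le> j \<and> T < H j \<omega>" by blast
        have L: "1 \<le> NT H T \<omega> \<and> T < H (NT H T \<omega>) \<omega>" unfolding NT_def by (rule LeastI_ex[OF ex])
        have L2: "\<not> (1 \<le> i \<and> T < H i \<omega>)" if "i < NT H T \<omega>" for i
          unfolding NT_def using that not_less_Least unfolding NT_def by blast
        have "\<omega> \<in> G" using w L L2 unfolding G_def A_def
          by (auto simp: not_less)
        thus ?thesis by simp
      qed simp
    qed
    have "prob {\<omega>\<in>space M. NT H T \<omega> = n} = prob G"
    proof (rule antisym)
      have "prob {\<omega>\<in>space M. NT H T \<omega> = n} \<le> prob (G \<union> Z)" by (intro finite_measure_mono NG) (use Gs Zs in auto)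
      also have "\<dots> \<le> prob G + prob Z" by (rule measure_Un_le) (use Gs Zs in auto)
      finally show "prob {\<omega>\<in>space M. NT H T \<omega> = n} \<le> prob G" using Z0 by simp
      show "prob G \<le> prob {\<omega>\<in>space M. NT H T \<omega> = n}" by (intro finite_measure_mono GN NTs)
    qed
    also have "prob G = (\<Prod>i\<in>{1..n}. prob {\<omega>\<in>space M. H i \<omega> \<in> A i})"
      unfolding G_def by (rule prodf) (use False in simp)
    also have "\<dots> = (\<Prod>i\<in>{1..n}. if i < n then 1 - \<delta> else \<delta>)"
    proof (rule prod.cong)
      fix i assume i: "i \<in> {1..n}"
      show "prob {\<omega>\<in>space M. H i \<omega> \<in> A i} = (if i < n then 1 - \<delta> else \<delta>)"
      proof (cases "i < n")
        case True thus ?thesis using le[of i] i by (simp add: A_def)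
      next
        case False thus ?thesis using same[of i] i by (simp add: A_def)
      qed
    qed simp
    also have "\<dots> = \<delta> * (1 - \<delta>) ^ (n - 1)"
    proof -
      have "{1..n} = insert n {1..<n}" using False by auto
      hence "(\<Prod>i\<in>{1..n}. if i < n then 1 - \<delta> else \<delta>) = \<delta> * (\<Prod>i\<in>{1..<n}. if i < n then 1 - \<delta> else \<delta>)"
        by simp
      also have "(\<Prod>i\<in>{1..<n}. if i < n then 1 - \<delta> else \<delta>) = (\<Prod>i\<in>{1..<n}. 1 - \<delta>)" by (rule prod.cong) auto
      finally show ?thesis by simp
    qed
    finally show ?thesis using False by simp
  qed
qed


lemma bernoulli_clamp: "bernoulli_pmf y = bernoulli_pmf (min 1 (max 0 y))"
  by (rule pmf_eqI) (simp add: bernoulli_pmf.rep_eq)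

lemma pmf_Qb:
  "pmf (map_pmf (\<lambda>f. {i. f i}) (Pi_pmf {0..<n::nat} False (\<lambda>_. bernoulli_pmf y))) S
     = (if S \<subseteq> {0..<n} then (\<Prod>x\<in>{0..<n}. pmf (bernoulli_pmf y) (x \<in> S)) else 0)"
proof -
  have inj: "inj (\<lambda>f::nat \<Rightarrow> bool. {i. f i})"
    by (rule injI, rule ext) (metis mem_Collect_eq)
  have S: "S = (\<lambda>f. {i. f i}) (\<lambda>i. i \<in> S)" by simp
  have "pmf (map_pmf (\<lambda>f. {i. f i}) (Pi_pmf {0..<n} False (\<lambda>_. bernoulli_pmf y))) S
      = pmf (Pi_pmf {0..<n} False (\<lambda>_. bernoulli_pmf y)) (\<lambda>i. i \<in> S)"
  proof -
    have "pmf (map_pmf (\<lambda>f. {i. f i}) (Pi_pmf {0..<n} False (\<lambda>_. bernoulli_pmf y))) ((\<lambda>f. {i. f i}) (\<lambda>i. i \<in> S))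
       = pmf (Pi_pmf {0..<n} False (\<lambda>_. bernoulli_pmf y)) (\<lambda>i. i \<in> S)"
      using pmf_map_inj'[OF inj, of "Pi_pmf {0..<n} False (\<lambda>_. bernoulli_pmf y)" "\<lambda>i. i \<in> S"] by simp
    thus ?thesis by simp
  qed
  also have "\<dots> = (if (\<forall>x. x \<notin> {0..<n} \<longrightarrow> (x \<in> S) = False) then (\<Prod>x\<in>{0..<n}. pmf (bernoulli_pmf y) (x \<in> S)) else 0)"
    by (rule pmf_Pi) simp
  also have "(\<forall>x. x \<notin> {0..<n} \<longrightarrow> (x \<in> S) = False) \<longleftrightarrow> S \<subseteq> {0..<n}" by auto
  finally show ?thesis .
qed

lemma pmf_Qb_val:
  assumes "0 \<le> y" "y \<le> 1" "S \<subseteq> {0..<n::nat}"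
  shows "(\<Prod>x\<in>{0..<n}. pmf (bernoulli_pmf y) (x \<in> S)) = y ^ card S * (1 - y) ^ (n - card S)"
proof -
  have "(\<Prod>x\<in>{0..<n}. pmf (bernoulli_pmf y) (x \<in> S)) = (\<Prod>x\<in>{0..<n}. if x \<in> S then y else 1 - y)"
    using assms by (intro prod.cong) auto
  also have "\<dots> = (\<Prod>x\<in>{0..<n} \<inter> {x. x \<in> S}. y) * (\<Prod>x\<in>{0..<n} \<inter> - {x. x \<in> S}. 1 - y)"
    by (rule prod.If_cases) simp
  also have "{0..<n} \<inter> {x. x \<in> S} = S" using assms by auto
  also have "{0..<n} \<inter> - {x. x \<in> S} = {0..<n} - S" by auto
  finally have e: "(\<Prod>x\<in>{0..<n}. pmf (bernoulli_pmf y) (x \<in> S)) = (\<Prod>x\<in>S. y) * (\<Prod>x\<in>{0..<n} - S. 1 - y)" .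
  have "card ({0..<n} - S) = n - card S" using assms by (simp add: card_Diff_subset finite_subset)
  thus ?thesis unfolding e by simp
qed

lemma supp_Qb: "set_pmf (map_pmf (\<lambda>f. {i. f i}) (Pi_pmf {0..<n::nat} False (\<lambda>_. bernoulli_pmf y))) \<subseteq> Pow {0..<n}"
proof
  fix S assume "S \<in> set_pmf (map_pmf (\<lambda>f. {i. f i}) (Pi_pmf {0..<n} False (\<lambda>_. bernoulli_pmf y)))"
  hence "pmf (map_pmf (\<lambda>f. {i. f i}) (Pi_pmf {0..<n} False (\<lambda>_. bernoulli_pmf y))) S \<noteq> 0"
    by (metis set_pmf_iff)
  thus "S \<in> Pow {0..<n}" unfolding pmf_Qb by (auto split: if_splits)
qed

lemma card_Sub: "card {S. S \<subseteq> {0..<n::nat} \<and> card S = k} = n choose k"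
  using n_subsets[of "{0..<n}" k] by simp

lemma Sub_ne: "k \<le> n \<Longrightarrow> {S. S \<subseteq> {0..<n::nat} \<and> card S = k} \<noteq> {}"
proof -
  assume "k \<le> n"
  hence "{0..<k} \<in> {S. S \<subseteq> {0..<n::nat} \<and> card S = k}" by auto
  thus ?thesis by blast
qed

lemma Sub_fin: "finite {S. S \<subseteq> {0..<n::nat} \<and> card S = k}"
  by (rule finite_subset[of _ "Pow {0..<n}"]) auto

lemma supp_Qk: "set_pmf (if k \<le> (n::nat) then pmf_of_set {S. S \<subseteq> {0..<n} \<and> card S = k} else return_pmf {}) \<subseteq> Pow {0..<n}"
  using Sub_ne[of k n] Sub_fin[of n k] by auto

lemma pmf_Qk: "k \<le> (n::nat) \<Longrightarrow> pmf (if k \<le> n then pmf_of_set {S. S \<subseteq> {0..<n} \<and> card S = k} else return_pmf {}) S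
   = (if S \<subseteq> {0..<n} \<and> card S = k then 1 / real (n choose k) else 0)"
  using Sub_ne[of k n] Sub_fin[of n k] by (simp add: card_Sub indicator_def)



lemma sd_len: "length (sample_depths h T S) = card S"
  unfolding sample_depths_def Let_def by simp

lemma sd_eq_imp: "sample_depths h T S = xs \<Longrightarrow> xs \<noteq> [] \<Longrightarrow> finite S \<and> card S = length xs"
  using sd_len[of h T S] by (metis card.infinite length_0_conv)

lemma Max_sets:
  fixes H :: "nat \<Rightarrow> 'a \<Rightarrow> nat"
  assumes Hm: "\<And>i. 1 \<le> i \<Longrightarrow> H i \<in> measurable M (count_space UNIV)"
    and I: "finite I" "\<forall>j\<in>I. 1 \<le> j"
  shows "{\<omega>\<in>space M. Max ((\<lambda>j. H j \<omega>) ` I) = v} \<in> sets M"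
proof (cases "I = {}")
  case True
  thus ?thesis by (cases "Max {} = v") auto
next
  case False
  have hs: "{\<omega>\<in>space M. P (H j \<omega>)} \<in> sets M" if "j \<in> I" for j P
  proof -
    have "{\<omega>\<in>space M. P (H j \<omega>)} = H j -` {x. P x} \<inter> space M" by auto
    thus ?thesis using measurable_sets[OF Hm, of j "{x. P x}"] I that by auto
  qed
  have "{\<omega>\<in>space M. Max ((\<lambda>j. H j \<omega>) ` I) = v}
      = {\<omega>\<in>space M. (\<exists>j\<in>I. H j \<omega> = v)} \<inter> {\<omega>\<in>space M. (\<forall>j\<in>I. H j \<omega> \<le> v)}"
  proof -
    have "Max ((\<lambda>j. H j \<omega>) ` I) = v \<longleftrightarrow> (\<exists>j\<in>I. H j \<omega> = v) \<and> (\<forall>j\<in>I. H j \<omega> \<le> v)" for \<omega>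
    proof -
      have "Max ((\<lambda>j. H j \<omega>) ` I) = v \<longleftrightarrow> v \<in> (\<lambda>j. H j \<omega>) ` I \<and> (\<forall>a\<in>(\<lambda>j. H j \<omega>) ` I. a \<le> v)"
        by (rule Max_eq_iff) (use False I in auto)
      thus ?thesis by auto
    qed
    thus ?thesis by blast
  qed
  also have "\<dots> \<in> sets M"
    by (intro sets.Int sets.sets_Collect_finite_Ex sets.sets_Collect_finite_All hs I)
  finally show ?thesis .
qed

lemma E_sets:
  fixes H :: "nat \<Rightarrow> 'a \<Rightarrow> nat"
  assumes Hm: "\<And>i. 1 \<le> i \<Longrightarrow> H i \<in> measurable M (count_space UNIV)"
    and ne: "xs \<noteq> []"
  shows "{\<omega>\<in>space M. sample_depths (\<lambda>i. H i \<omega>) T S = xs} \<in> sets M"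
proof (cases "finite S \<and> card S = length xs")
  case False
  have e0: "{\<omega>\<in>space M. sample_depths (\<lambda>i. H i \<omega>) T S = xs} = {}"
    using sd_eq_imp ne False by blast
  show ?thesis unfolding e0 by (rule sets.empty_sets)
next
  case True
  define s where "s = sorted_list_of_set S"
  define c where "c = card S"
  have ls: "length s = c" unfolding s_def c_def by simp
  have sorted: "sorted_wrt (<) s" unfolding s_def by simp
  define g where "g i \<omega> = (if i = 0 then T else Max ((\<lambda>j. H j \<omega>) ` {s ! (i - 1)<..s ! i}))" for i \<omega>
  have eq: "sample_depths (\<lambda>i. H i \<omega>) T S = xs \<longleftrightarrow> (\<forall>i\<in>{..<c}. g i \<omega> = xs ! i)" for \<omega>
  proof -
    have sd: "sample_depths (\<lambda>i. H i \<omega>) T S = map (\<lambda>i. g i \<omega>) [0..<c]"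
      unfolding sample_depths_def Let_def g_def s_def c_def by (rule refl)
    have "map (\<lambda>i. g i \<omega>) [0..<c] = xs \<longleftrightarrow> (\<forall>i<c. map (\<lambda>i. g i \<omega>) [0..<c] ! i = xs ! i)"
      using True unfolding list_eq_iff_nth_eq c_def by simp
    also have "\<dots> \<longleftrightarrow> (\<forall>i\<in>{..<c}. g i \<omega> = xs ! i)" by auto
    finally show ?thesis unfolding sd .
  qed
  have "{\<omega>\<in>space M. sample_depths (\<lambda>i. H i \<omega>) T S = xs} = {\<omega>\<in>space M. \<forall>i\<in>{..<c}. g i \<omega> = xs ! i}"
    using eq by auto
  also have "\<dots> \<in> sets M"
  proof (intro sets.sets_Collect_finite_All)
    fix i assume "i \<in> {..<c}"
    show "{\<omega>\<in>space M. g i \<omega> = xs ! i} \<in> sets M"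
    proof (cases "i = 0")
      case True thus ?thesis unfolding g_def by (cases "T = xs ! 0") auto
    next
      case False
      have "{\<omega>\<in>space M. g i \<omega> = xs ! i} = {\<omega>\<in>space M. Max ((\<lambda>j. H j \<omega>) ` {s ! (i - 1)<..s ! i}) = xs ! i}"
        using False by (simp add: g_def)
      also have "\<dots> \<in> sets M" by (rule Max_sets[OF Hm]) auto
      finally show ?thesis .
    qed
  qed simp
  finally show ?thesis .
qed

lemma ES_sets:
  fixes H :: "nat \<Rightarrow> 'a \<Rightarrow> nat"
  assumes Hm: "\<And>i. 1 \<le> i \<Longrightarrow> H i \<in> measurable M (count_space UNIV)"
    and ne: "xs \<noteq> []"
  shows "{z\<in>space (M \<Otimes>\<^sub>M (count_space UNIV :: nat set measure)). sample_depths (\<lambda>i. H i (fst z)) T (snd z) = xs}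
          \<in> sets (M \<Otimes>\<^sub>M (count_space UNIV :: nat set measure))"
proof -
  have "{z\<in>space (M \<Otimes>\<^sub>M (count_space UNIV :: nat set measure)). sample_depths (\<lambda>i. H i (fst z)) T (snd z) = xs}
     = (\<Union>S\<in>{S. finite S}. {\<omega>\<in>space M. sample_depths (\<lambda>i. H i \<omega>) T S = xs} \<times> {S})"
  proof (rule set_eqI)
    fix z :: "'a \<times> nat set"
    obtain \<omega> S where z: "z = (\<omega>, S)" by (cases z)
    have "z \<in> {z\<in>space (M \<Otimes>\<^sub>M (count_space UNIV :: nat set measure)). sample_depths (\<lambda>i. H i (fst z)) T (snd z) = xs}
       \<longleftrightarrow> \<omega> \<in> space M \<and> sample_depths (\<lambda>i. H i \<omega>) T S = xs"
      unfolding z by (simp add: space_pair_measure)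
    also have "\<dots> \<longleftrightarrow> finite S \<and> \<omega> \<in> space M \<and> sample_depths (\<lambda>i. H i \<omega>) T S = xs"
      using sd_eq_imp[OF _ ne] by blast
    also have "\<dots> \<longleftrightarrow> z \<in> (\<Union>S\<in>{S. finite S}. {\<omega>\<in>space M. sample_depths (\<lambda>i. H i \<omega>) T S = xs} \<times> {S})"
      unfolding z by blast
    finally show "z \<in> {z\<in>space (M \<Otimes>\<^sub>M (count_space UNIV :: nat set measure)). sample_depths (\<lambda>i. H i (fst z)) T (snd z) = xs}
       \<longleftrightarrow> z \<in> (\<Union>S\<in>{S. finite S}. {\<omega>\<in>space M. sample_depths (\<lambda>i. H i \<omega>) T S = xs} \<times> {S})" .
  qed
  also have "\<dots> \<in> sets (M \<Otimes>\<^sub>M (count_space UNIV :: nat set measure))"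
  proof (rule sets.countable_UN'[OF countable_Collect_finite])
    have "{\<omega>\<in>space M. sample_depths (\<lambda>i. H i \<omega>) T S = xs} \<times> {S} \<in> sets (M \<Otimes>\<^sub>M (count_space UNIV :: nat set measure))" for S
      by (rule pair_measureI[OF E_sets[OF Hm ne]]) auto
    thus "(\<lambda>S. {\<omega>\<in>space M. sample_depths (\<lambda>i. H i \<omega>) T S = xs} \<times> {S}) ` {S. finite S} \<subseteq> sets (M \<Otimes>\<^sub>M (count_space UNIV :: nat set measure))"
      by auto
  qed
  finally show ?thesis .
qed



theorem theorem2p8:
  fixes M :: "'a measure" and H :: "nat \<Rightarrow> 'a \<Rightarrow> nat"
    and p r :: real and T k :: nat and xs :: "nat list"
  assumes "prob_space M"
    and "0 < p" "p < 1" "0 \<le> r" "r \<le> 1" "p \<noteq> r" "r / p > 1"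
    and "prob_space.indep_vars M (\<lambda>_. count_space UNIV) H {1..}"
    and "\<forall>i\<ge>1. \<forall>n. measure M {\<omega> \<in> space M. n < H i \<omega>} = tailH p r n"
    and "1 \<le> k"
    and "length xs = k" "xs ! 0 = T" "\<forall>i\<in>{1..<k}. xs ! i \<in> {1..T}"
  shows "\<P>(z in k_sample M H T k. sample_depths (\<lambda>i. H i (fst z)) T (snd z) = xs
              \<bar> k \<le> NT H T (fst z))
       = (\<integral>y. \<P>(z in bern_sample M H T y. sample_depths (\<lambda>i. H i (fst z)) T (snd z) = xs
                      \<bar> card (snd z) = k)
            \<partial>(mu k (measure M {\<omega> \<in> space M. T < H 1 \<omega>})))"
proof -
  interpret P: prob_space M by (rule assms(1))
  let ?C = "count_space UNIV :: nat set measure"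
  define \<delta> where "\<delta> = measure M {\<omega> \<in> space M. T < H 1 \<omega>}"
  define q where "q = 1 - \<delta>"
  have Hm: "H i \<in> measurable M (count_space UNIV)" if "1 \<le> i" for i
    using assms(8) that unfolding P.indep_vars_def by auto
  have same: "measure M {\<omega>\<in>space M. T < H i \<omega>} = \<delta>" if "1 \<le> i" for i
    using assms(9) that unfolding \<delta>_def by auto
  have dpos: "0 < \<delta>"
  proof -
    have rp: "p < r" using assms(2,7) by (simp add: field_simps)
    have "1 \<le> (r / p) ^ T" using assms(7) by (intro one_le_power) simp
    hence "(1 - p) * 1 \<le> (1 - p) * (r / p) ^ T" using assms(3) by (intro mult_left_mono) auto
    hence "0 < (1 - p) * (r / p) ^ T - (1 - r)" using rp by simp
    hence "0 < tailH p r T" unfolding tailH_def using rp by simp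
    thus ?thesis using same[of 1] assms(9) by simp
  qed
  have d1: "\<delta> \<le> 1" unfolding \<delta>_def by (rule P.prob_le_1)
  have q0: "0 \<le> q" "q < 1" using dpos d1 unfolding q_def by auto
  have NTm: "NT H T \<in> measurable M (count_space UNIV)"
    by (rule NT_law(1)[OF assms(1) assms(8) same dpos])
  define pN where "pN n = measure M {\<omega>\<in>space M. NT H T \<omega> = n}" for n
  have pN: "pN n = (if n = 0 then 0 else \<delta> * q ^ (n - 1))" for n
    unfolding pN_def q_def by (rule NT_law(2)[OF assms(1) assms(8) same dpos])
  have xsne: "xs \<noteq> []" using assms(10,11) by auto
  define E where "E \<omega> S \<longleftrightarrow> sample_depths (\<lambda>i. H i \<omega>) T S = xs" for \<omega> S
  define a where "a n S = measure M {\<omega>\<in>space M. NT H T \<omega> = n \<and> E \<omega> S}" for n S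
  define c where "c n = (\<Sum>S\<in>Pow {0..<n}. a n S)" for n
  have a0: "a n S = 0" if "card S \<noteq> k" for n S
  proof -
    have e: "{\<omega>\<in>space M. NT H T \<omega> = n \<and> E \<omega> S} = {}"
      using sd_eq_imp[OF _ xsne] that assms(11) unfolding E_def by blast
    show ?thesis unfolding a_def e by simp
  qed
  have c0: "c n = 0" if "n < k" for n
    unfolding c_def
  proof (intro sum.neutral ballI)
    fix S assume "S \<in> Pow {0..<n}"
    hence "card S \<le> n" using card_mono[of "{0..<n}" S] by auto
    thus "a n S = 0" using that by (intro a0) auto
  qed
  have a_nn: "0 \<le> a n S" for n S unfolding a_def by simp
  have c_nn: "0 \<le> c n" for n unfolding c_def by (intro sum_nonneg a_nn)
  note [measurable] = NTm
  define Qk where "Qk (n::nat) = (if k \<le> n then pmf_of_set {S. S \<subseteq> {0..<n} \<and> card S = k} else return_pmf {})" for n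
  have suppk: "set_pmf (Qk n) \<subseteq> Pow {0..<n}" for n unfolding Qk_def by (rule supp_Qk)
  have ks: "k_sample M H T k = M \<bind> (\<lambda>\<omega>. distr (measure_pmf (Qk (NT H T \<omega>))) (M \<Otimes>\<^sub>M ?C) (\<lambda>S. (\<omega>, S)))"
    unfolding k_sample_def Qk_def by (rule refl)
  have spk: "space (k_sample M H T k) = space (M \<Otimes>\<^sub>M ?C)"
    unfolding ks by (rule space_bind) (simp_all add: P.not_empty)
  have ES: "{z\<in>space (M \<Otimes>\<^sub>M ?C). sample_depths (\<lambda>i. H i (fst z)) T (snd z) = xs} \<in> sets (M \<Otimes>\<^sub>M ?C)"
    by (rule ES_sets[OF Hm xsne])
  have X1: "{z\<in>space (M \<Otimes>\<^sub>M ?C). k \<le> NT H T (fst z)} \<in> sets (M \<Otimes>\<^sub>M ?C)"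
    by measurable
  have X2: "{z\<in>space (M \<Otimes>\<^sub>M ?C). sample_depths (\<lambda>i. H i (fst z)) T (snd z) = xs \<and> k \<le> NT H T (fst z)} \<in> sets (M \<Otimes>\<^sub>M ?C)"
  proof -
    have "{z\<in>space (M \<Otimes>\<^sub>M ?C). sample_depths (\<lambda>i. H i (fst z)) T (snd z) = xs \<and> k \<le> NT H T (fst z)}
      = {z\<in>space (M \<Otimes>\<^sub>M ?C). sample_depths (\<lambda>i. H i (fst z)) T (snd z) = xs} \<inter> {z\<in>space (M \<Otimes>\<^sub>M ?C). k \<le> NT H T (fst z)}"
      by blast
    thus ?thesis using ES X1 by simp
  qed
  have denk_s: "(\<lambda>n. if k \<le> n then pN n else 0) sums measure (k_sample M H T k) {z\<in>space (M \<Otimes>\<^sub>M ?C). k \<le> NT H T (fst z)}"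
  proof -
    have "(\<lambda>n. \<Sum>S\<in>Pow {0..<n}. pmf (Qk n) S * measure M {\<omega>\<in>space M. NT H T \<omega> = n \<and> (\<omega>, S) \<in> {z\<in>space (M \<Otimes>\<^sub>M ?C). k \<le> NT H T (fst z)}})
       sums measure (k_sample M H T k) {z\<in>space (M \<Otimes>\<^sub>M ?C). k \<le> NT H T (fst z)}"
      unfolding ks by (rule bind_formula_real[OF assms(1) NTm suppk X1])
    moreover have "(\<Sum>S\<in>Pow {0..<n}. pmf (Qk n) S * measure M {\<omega>\<in>space M. NT H T \<omega> = n \<and> (\<omega>, S) \<in> {z\<in>space (M \<Otimes>\<^sub>M ?C). k \<le> NT H T (fst z)}})
       = (if k \<le> n then pN n else 0)" for n
    proof -
      have "{\<omega>\<in>space M. NT H T \<omega> = n \<and> (\<omega>, S) \<in> {z\<in>space (M \<Otimes>\<^sub>M ?C). k \<le> NT H T (fst z)}}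
         = (if k \<le> n then {\<omega>\<in>space M. NT H T \<omega> = n} else {})" for S
        by (auto simp: space_pair_measure)
      hence "(\<Sum>S\<in>Pow {0..<n}. pmf (Qk n) S * measure M {\<omega>\<in>space M. NT H T \<omega> = n \<and> (\<omega>, S) \<in> {z\<in>space (M \<Otimes>\<^sub>M ?C). k \<le> NT H T (fst z)}})
         = (\<Sum>S\<in>Pow {0..<n}. pmf (Qk n) S) * (if k \<le> n then pN n else 0)"
        by (simp add: sum_distrib_right pN_def)
      also have "(\<Sum>S\<in>Pow {0..<n}. pmf (Qk n) S) = 1" by (rule sum_pmf_eq_1) (use suppk in auto)
      finally show ?thesis by simp
    qed
    ultimately show ?thesis by simp
  qed
  have denk_v: "(\<lambda>n. if k \<le> n then pN n else 0) sums q ^ (k - 1)"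
  proof -
    have "(\<lambda>m. q ^ m) sums (1 / (1 - q))" using q0 by (intro geometric_sums) simp
    hence "(\<lambda>m. \<delta> * q ^ (k - 1) * q ^ m) sums (\<delta> * q ^ (k - 1) * (1 / (1 - q)))" by (rule sums_mult)
    also have "\<delta> * q ^ (k - 1) * (1 / (1 - q)) = q ^ (k - 1)" using dpos unfolding q_def by simp
    also have "(\<lambda>m. \<delta> * q ^ (k - 1) * q ^ m) = (\<lambda>m. if k \<le> m + k then pN (m + k) else 0)"
    proof
      fix m
      have "m + k - 1 = (k - 1) + m" using assms(10) by simp
      hence "q ^ (m + k - 1) = q ^ (k - 1) * q ^ m" by (simp only: power_add)
      thus "\<delta> * q ^ (k - 1) * q ^ m = (if k \<le> m + k then pN (m + k) else 0)" using assms(10) by (simp add: pN)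
    qed
    finally show ?thesis by (subst (asm) sums_zero_iff_shift) auto
  qed
  define w where "w n = c n / real (n choose k)" for n
  have numk_s: "w sums measure (k_sample M H T k) {z\<in>space (M \<Otimes>\<^sub>M ?C). sample_depths (\<lambda>i. H i (fst z)) T (snd z) = xs \<and> k \<le> NT H T (fst z)}"
  proof -
    have "(\<lambda>n. \<Sum>S\<in>Pow {0..<n}. pmf (Qk n) S * measure M {\<omega>\<in>space M. NT H T \<omega> = n \<and> (\<omega>, S) \<in> {z\<in>space (M \<Otimes>\<^sub>M ?C). sample_depths (\<lambda>i. H i (fst z)) T (snd z) = xs \<and> k \<le> NT H T (fst z)}})
       sums measure (k_sample M H T k) {z\<in>space (M \<Otimes>\<^sub>M ?C). sample_depths (\<lambda>i. H i (fst z)) T (snd z) = xs \<and> k \<le> NT H T (fst z)}"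
      unfolding ks by (rule bind_formula_real[OF assms(1) NTm suppk X2])
    moreover have "(\<Sum>S\<in>Pow {0..<n}. pmf (Qk n) S * measure M {\<omega>\<in>space M. NT H T \<omega> = n \<and> (\<omega>, S) \<in> {z\<in>space (M \<Otimes>\<^sub>M ?C). sample_depths (\<lambda>i. H i (fst z)) T (snd z) = xs \<and> k \<le> NT H T (fst z)}})
       = w n" for n
    proof (cases "k \<le> n")
      case False
      have e: "{\<omega>\<in>space M. NT H T \<omega> = n \<and> (\<omega>, S) \<in> {z\<in>space (M \<Otimes>\<^sub>M ?C). sample_depths (\<lambda>i. H i (fst z)) T (snd z) = xs \<and> k \<le> NT H T (fst z)}} = {}" for S
        using False by auto
      show ?thesis using False c0[of n] unfolding w_def e by simp
    next
      case True
      have "{\<omega>\<in>space M. NT H T \<omega> = n \<and> (\<omega>, S) \<in> {z\<in>space (M \<Otimes>\<^sub>M ?C). sample_depths (\<lambda>i. H i (fst z)) T (snd z) = xs \<and> k \<le> NT H T (fst z)}}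
         = {\<omega>\<in>space M. NT H T \<omega> = n \<and> E \<omega> S}" for S
        using True by (auto simp: space_pair_measure E_def)
      hence "(\<Sum>S\<in>Pow {0..<n}. pmf (Qk n) S * measure M {\<omega>\<in>space M. NT H T \<omega> = n \<and> (\<omega>, S) \<in> {z\<in>space (M \<Otimes>\<^sub>M ?C). sample_depths (\<lambda>i. H i (fst z)) T (snd z) = xs \<and> k \<le> NT H T (fst z)}})
         = (\<Sum>S\<in>Pow {0..<n}. pmf (Qk n) S * a n S)" unfolding a_def by simp
      also have "\<dots> = (\<Sum>S\<in>Pow {0..<n}. a n S / real (n choose k))"
      proof (rule sum.cong)
        fix S assume S: "S \<in> Pow {0..<n}"
        show "pmf (Qk n) S * a n S = a n S / real (n choose k)"
        proof (cases "card S = k")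
          case True
          thus ?thesis using S \<open>k \<le> n\<close> unfolding Qk_def by (subst pmf_Qk) auto
        next
          case False thus ?thesis using a0 by simp
        qed
      qed simp
      also have "\<dots> = w n" unfolding w_def c_def by (rule sum_divide_distrib[symmetric])
      finally show ?thesis .
    qed
    ultimately show ?thesis by simp
  qed
  have LHS: "\<P>(z in k_sample M H T k. sample_depths (\<lambda>i. H i (fst z)) T (snd z) = xs \<bar> k \<le> NT H T (fst z))
     = suminf w / q ^ (k - 1)"
    unfolding cond_prob_def spk using sums_unique[OF numk_s] sums_unique[OF denk_s] sums_unique[OF denk_v]
    by simp
  define Qb where "Qb (y::real) (n::nat) = map_pmf (\<lambda>f. {i. f i}) (Pi_pmf {0..<n} False (\<lambda>_. bernoulli_pmf y))" for y n
  have suppb: "set_pmf (Qb y n) \<subseteq> Pow {0..<n}" for y n unfolding Qb_def by (rule supp_Qb)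
  have bs: "bern_sample M H T y = M \<bind> (\<lambda>\<omega>. distr (measure_pmf (Qb y (NT H T \<omega>))) (M \<Otimes>\<^sub>M ?C) (\<lambda>S. (\<omega>, S)))" for y
    unfolding bern_sample_def Qb_def by (rule refl)
  have spb: "space (bern_sample M H T y) = space (M \<Otimes>\<^sub>M ?C)" for y
    unfolding bs by (rule space_bind) (simp_all add: P.not_empty)
  have pmfb: "pmf (Qb y n) S = y ^ k * (1 - y) ^ (n - k)" if "0 \<le> y" "y \<le> 1" "S \<subseteq> {0..<n}" "card S = k" for y n S
    using that unfolding Qb_def pmf_Qb by (simp add: pmf_Qb_val)
  have Xb1: "{z\<in>space (M \<Otimes>\<^sub>M ?C). card (snd z) = k} \<in> sets (M \<Otimes>\<^sub>M ?C)"
  proof -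
    have "{z\<in>space (M \<Otimes>\<^sub>M ?C). card (snd z) = k} = space M \<times> {S. card S = k}"
      by (auto simp: space_pair_measure)
    thus ?thesis by (auto intro!: pair_measureI)
  qed
  have Xb2: "{z\<in>space (M \<Otimes>\<^sub>M ?C). sample_depths (\<lambda>i. H i (fst z)) T (snd z) = xs \<and> card (snd z) = k} \<in> sets (M \<Otimes>\<^sub>M ?C)"
  proof -
    have "{z\<in>space (M \<Otimes>\<^sub>M ?C). sample_depths (\<lambda>i. H i (fst z)) T (snd z) = xs \<and> card (snd z) = k}
      = {z\<in>space (M \<Otimes>\<^sub>M ?C). sample_depths (\<lambda>i. H i (fst z)) T (snd z) = xs} \<inter> {z\<in>space (M \<Otimes>\<^sub>M ?C). card (snd z) = k}"
      by blast
    thus ?thesis using ES Xb1 by simp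
  qed
  have denb_s: "(\<lambda>n. real (n choose k) * (y ^ k * (1 - y) ^ (n - k)) * pN n) sums
      measure (bern_sample M H T y) {z\<in>space (M \<Otimes>\<^sub>M ?C). card (snd z) = k}" if y: "0 \<le> y" "y \<le> 1" for y
  proof -
    have "(\<lambda>n. \<Sum>S\<in>Pow {0..<n}. pmf (Qb y n) S * measure M {\<omega>\<in>space M. NT H T \<omega> = n \<and> (\<omega>, S) \<in> {z\<in>space (M \<Otimes>\<^sub>M ?C). card (snd z) = k}})
       sums measure (bern_sample M H T y) {z\<in>space (M \<Otimes>\<^sub>M ?C). card (snd z) = k}"
      unfolding bs by (rule bind_formula_real[OF assms(1) NTm suppb Xb1])
    moreover have "(\<Sum>S\<in>Pow {0..<n}. pmf (Qb y n) S * measure M {\<omega>\<in>space M. NT H T \<omega> = n \<and> (\<omega>, S) \<in> {z\<in>space (M \<Otimes>\<^sub>M ?C). card (snd z) = k}})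
       = real (n choose k) * (y ^ k * (1 - y) ^ (n - k)) * pN n" for n
    proof -
      have "(\<Sum>S\<in>Pow {0..<n}. pmf (Qb y n) S * measure M {\<omega>\<in>space M. NT H T \<omega> = n \<and> (\<omega>, S) \<in> {z\<in>space (M \<Otimes>\<^sub>M ?C). card (snd z) = k}})
         = (\<Sum>S\<in>Pow {0..<n}. if card S = k then y ^ k * (1 - y) ^ (n - k) * pN n else 0)"
      proof (rule sum.cong)
        fix S assume S: "S \<in> Pow {0..<n}"
        show "pmf (Qb y n) S * measure M {\<omega>\<in>space M. NT H T \<omega> = n \<and> (\<omega>, S) \<in> {z\<in>space (M \<Otimes>\<^sub>M ?C). card (snd z) = k}}
           = (if card S = k then y ^ k * (1 - y) ^ (n - k) * pN n else 0)"
        proof (cases "card S = k")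
          case True
          have "{\<omega>\<in>space M. NT H T \<omega> = n \<and> (\<omega>, S) \<in> {z\<in>space (M \<Otimes>\<^sub>M ?C). card (snd z) = k}} = {\<omega>\<in>space M. NT H T \<omega> = n}"
            using True by (auto simp: space_pair_measure)
          thus ?thesis using True S y by (simp add: pmfb pN_def)
        next
          case False
          have "{\<omega>\<in>space M. NT H T \<omega> = n \<and> (\<omega>, S) \<in> {z\<in>space (M \<Otimes>\<^sub>M ?C). card (snd z) = k}} = {}"
            using False by auto
          thus ?thesis using False by simp
        qed
      qed simp
      also have "\<dots> = (\<Sum>S\<in>{S \<in> Pow {0..<n}. card S = k}. y ^ k * (1 - y) ^ (n - k) * pN n)"
        by (rule sum.inter_filter[symmetric]) simp
      also have "{S \<in> Pow {0..<n}. card S = k} = {S. S \<subseteq> {0..<n} \<and> card S = k}" by auto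
      also have "(\<Sum>S\<in>{S. S \<subseteq> {0..<n} \<and> card S = k}. y ^ k * (1 - y) ^ (n - k) * pN n)
          = real (n choose k) * (y ^ k * (1 - y) ^ (n - k) * pN n)" by (simp add: card_Sub)
      finally show ?thesis by simp
    qed
    ultimately show ?thesis by simp
  qed
  have numb_s: "(\<lambda>n. y ^ k * (1 - y) ^ (n - k) * c n) sums
      measure (bern_sample M H T y) {z\<in>space (M \<Otimes>\<^sub>M ?C). sample_depths (\<lambda>i. H i (fst z)) T (snd z) = xs \<and> card (snd z) = k}"
    if y: "0 \<le> y" "y \<le> 1" for y
  proof -
    have "(\<lambda>n. \<Sum>S\<in>Pow {0..<n}. pmf (Qb y n) S * measure M {\<omega>\<in>space M. NT H T \<omega> = n \<and> (\<omega>, S) \<in> {z\<in>space (M \<Otimes>\<^sub>M ?C). sample_depths (\<lambda>i. H i (fst z)) T (snd z) = xs \<and> card (snd z) = k}})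
       sums measure (bern_sample M H T y) {z\<in>space (M \<Otimes>\<^sub>M ?C). sample_depths (\<lambda>i. H i (fst z)) T (snd z) = xs \<and> card (snd z) = k}"
      unfolding bs by (rule bind_formula_real[OF assms(1) NTm suppb Xb2])
    moreover have "(\<Sum>S\<in>Pow {0..<n}. pmf (Qb y n) S * measure M {\<omega>\<in>space M. NT H T \<omega> = n \<and> (\<omega>, S) \<in> {z\<in>space (M \<Otimes>\<^sub>M ?C). sample_depths (\<lambda>i. H i (fst z)) T (snd z) = xs \<and> card (snd z) = k}})
       = y ^ k * (1 - y) ^ (n - k) * c n" for n
    proof -
      have "(\<Sum>S\<in>Pow {0..<n}. pmf (Qb y n) S * measure M {\<omega>\<in>space M. NT H T \<omega> = n \<and> (\<omega>, S) \<in> {z\<in>space (M \<Otimes>\<^sub>M ?C). sample_depths (\<lambda>i. H i (fst z)) T (snd z) = xs \<and> card (snd z) = k}})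
         = (\<Sum>S\<in>Pow {0..<n}. y ^ k * (1 - y) ^ (n - k) * a n S)"
      proof (rule sum.cong)
        fix S assume S: "S \<in> Pow {0..<n}"
        show "pmf (Qb y n) S * measure M {\<omega>\<in>space M. NT H T \<omega> = n \<and> (\<omega>, S) \<in> {z\<in>space (M \<Otimes>\<^sub>M ?C). sample_depths (\<lambda>i. H i (fst z)) T (snd z) = xs \<and> card (snd z) = k}}
           = y ^ k * (1 - y) ^ (n - k) * a n S"
        proof (cases "card S = k")
          case True
          have "{\<omega>\<in>space M. NT H T \<omega> = n \<and> (\<omega>, S) \<in> {z\<in>space (M \<Otimes>\<^sub>M ?C). sample_depths (\<lambda>i. H i (fst z)) T (snd z) = xs \<and> card (snd z) = k}}
             = {\<omega>\<in>space M. NT H T \<omega> = n \<and> E \<omega> S}"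
            using True by (auto simp: space_pair_measure E_def)
          thus ?thesis using True S y by (simp add: pmfb a_def)
        next
          case False
          have "{\<omega>\<in>space M. NT H T \<omega> = n \<and> (\<omega>, S) \<in> {z\<in>space (M \<Otimes>\<^sub>M ?C). sample_depths (\<lambda>i. H i (fst z)) T (snd z) = xs \<and> card (snd z) = k}} = {}"
            using False by auto
          thus ?thesis using False a0 by simp
        qed
      qed simp
      also have "\<dots> = y ^ k * (1 - y) ^ (n - k) * c n" unfolding c_def by (rule sum_distrib_left[symmetric])
      finally show ?thesis .
    qed
    ultimately show ?thesis by simp
  qed
  define Q where "Q = q ^ (k - 1)"
  have Q0: "0 \<le> Q" unfolding Q_def using q0 by simp
  define D where "D y = 1 - q * (1 - y)" for y
  define numB where "numB y = (\<Sum>n. y ^ k * (1 - y) ^ (n - k) * c n)" for y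
  define denB where "denB y = (\<Sum>n. real (n choose k) * (y ^ k * (1 - y) ^ (n - k)) * pN n)" for y
  define g where "g y = \<P>(z in bern_sample M H T y. sample_depths (\<lambda>i. H i (fst z)) T (snd z) = xs \<bar> card (snd z) = k)" for y
  have g_eq: "g y = numB y / denB y" if "0 \<le> y" "y \<le> 1" for y
    unfolding g_def cond_prob_def spb numB_def denB_def
    using sums_unique[OF numb_s[OF that]] sums_unique[OF denb_s[OF that]] by simp
  have bclamp: "bern_sample M H T y = bern_sample M H T (min 1 (max 0 y))" for y
    unfolding bern_sample_def by (subst bernoulli_clamp[of y]) (rule refl)
  have g_clamp: "g y = numB (min 1 (max 0 y)) / denB (min 1 (max 0 y))" for y
  proof -
    have "g y = g (min 1 (max 0 y))" unfolding g_def by (subst bclamp) (rule refl)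
    also have "\<dots> = numB (min 1 (max 0 y)) / denB (min 1 (max 0 y))" by (rule g_eq) auto
    finally show ?thesis .
  qed
  have g_meas: "g \<in> borel_measurable borel"
  proof -
    have "(\<lambda>y. numB (min 1 (max 0 y)) / denB (min 1 (max 0 y))) \<in> borel_measurable borel"
      unfolding numB_def denB_def by measurable
    moreover have "g = (\<lambda>y. numB (min 1 (max 0 y)) / denB (min 1 (max 0 y)))" using g_clamp by (rule ext)
    ultimately show ?thesis by simp
  qed
  have g_nn: "0 \<le> g y" for y unfolding g_def cond_prob_def by simp
  have denB_val: "denB y = \<delta> * Q * y ^ k / D y ^ (k + 1)" if y: "0 < y" "y < 1" for y
  proof -
    have "\<bar>q * (1 - y)\<bar> < 1"
    proof -
      have "0 \<le> q * (1 - y)" using q0 y by simp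
      moreover have "q * (1 - y) < 1 * 1" using q0 y by (intro mult_strict_mono') auto
      ultimately show ?thesis by simp
    qed
    from sums_mult[OF negbin_sums[OF this], of "\<delta> * Q * y ^ k"]
    have "(\<lambda>n. \<delta> * Q * y ^ k * (real (n choose k) * (q * (1 - y)) ^ (n - k))) sums (\<delta> * Q * y ^ k * (1 / (1 - q * (1 - y)) ^ (k + 1)))" .
    moreover have "\<delta> * Q * y ^ k * (real (n choose k) * (q * (1 - y)) ^ (n - k)) = real (n choose k) * (y ^ k * (1 - y) ^ (n - k)) * pN n" for n
    proof (cases "k \<le> n")
      case False thus ?thesis by simp
    next
      case True
      have "n - 1 = (k - 1) + (n - k)" using True assms(10) by simp
      hence "q ^ (n - 1) = Q * q ^ (n - k)" unfolding Q_def by (simp add: power_add)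
      thus ?thesis using True assms(10) by (simp add: pN power_mult_distrib)
    qed
    ultimately have "(\<lambda>n. real (n choose k) * (y ^ k * (1 - y) ^ (n - k)) * pN n) sums (\<delta> * Q * y ^ k / D y ^ (k + 1))"
      by (simp add: D_def)
    thus ?thesis unfolding denB_def by (rule sums_unique[symmetric])
  qed
  define \<beta> where "\<beta> = real k / Q"
  have b0: "0 \<le> \<beta>" unfolding \<beta>_def using Q0 by simp
  define \<rho> where "\<rho> y = indicator {0<..<1} y * (real k * \<delta> * y ^ (k - 1) / (1 - (1 - \<delta>) * (1 - y)) ^ (k + 1))" for y
  have mu_eq: "mu k \<delta> = density lborel (\<lambda>y. ennreal (\<rho> y))" unfolding mu_def \<rho>_def by (rule refl)
  define t where "t n y = indicator {0<..<1} y * (\<beta> * c n * (y ^ (k - 1) * (1 - y) ^ (n - k)))" for n y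
  have pt: "ennreal (\<rho> y) * ennreal (g y) = (\<Sum>n. ennreal (t n y))" for y
  proof (cases "y \<in> {0<..<1}")
    case False thus ?thesis unfolding \<rho>_def t_def by simp
  next
    case True
    hence y: "0 < y" "y < 1" by auto
    have Dpos: "0 < D y" unfolding D_def using q0 y by (smt (verit) mult_left_le_one_le)
    have rho: "\<rho> y = real k * \<delta> * y ^ (k - 1) / D y ^ (k + 1)" using True unfolding \<rho>_def D_def q_def by simp
    have rg: "\<rho> y * g y = (\<beta> / y) * numB y"
    proof (cases "Q = 0")
      case True
      thus ?thesis using g_eq[of y] y denB_val[OF y] unfolding \<beta>_def by simp
    next
      case False
      have yk: "y ^ k = y * y ^ (k - 1)" using assms(10) by (metis power_eq_if not_one_le_zero)
      have "\<rho> y * g y = real k * \<delta> * y ^ (k - 1) / D y ^ (k + 1) * (numB y / (\<delta> * Q * y ^ k / D y ^ (k + 1)))"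
        using g_eq[of y] y denB_val[OF y] rho by simp
      also have "\<dots> = (\<beta> / y) * numB y"
        unfolding \<beta>_def yk using dpos y Dpos False by (simp add: field_simps)
      finally show ?thesis .
    qed
    have sm: "summable (\<lambda>n. y ^ k * (1 - y) ^ (n - k) * c n)"
      using numb_s[of y] y by (simp add: sums_iff)
    have "(\<lambda>n. (\<beta> / y) * (y ^ k * (1 - y) ^ (n - k) * c n)) sums ((\<beta> / y) * numB y)"
      unfolding numB_def by (rule sums_mult[OF summable_sums[OF sm]])
    moreover have "(\<beta> / y) * (y ^ k * (1 - y) ^ (n - k) * c n) = t n y" for n
    proof -
      have yk: "y ^ k = y * y ^ (k - 1)" using assms(10) by (metis power_eq_if not_one_le_zero)
      show ?thesis unfolding t_def yk using True y by (simp add: field_simps)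
    qed
    ultimately have ts: "(\<lambda>n. t n y) sums (\<rho> y * g y)" unfolding rg by simp
    have t0: "0 \<le> t n y" for n unfolding t_def using y b0 c_nn by simp
    have "ennreal (\<rho> y) * ennreal (g y) = ennreal (\<rho> y * g y)"
    proof -
      have "0 \<le> \<rho> y" unfolding rho using y dpos Dpos by simp
      thus ?thesis using g_nn[of y] by (rule ennreal_mult[symmetric])
    qed
    also have "\<dots> = ennreal (\<Sum>n. t n y)" using ts by (simp add: sums_iff)
    also have "\<dots> = (\<Sum>n. ennreal (t n y))" using ts t0 by (intro suminf_ennreal2[symmetric]) (auto simp: sums_iff)
    finally show ?thesis .
  qed
  have tm: "(\<lambda>y. ennreal (t n y)) \<in> borel_measurable lborel" for n unfolding t_def by measurable
  have tint: "(\<integral>\<^sup>+y. ennreal (t n y) \<partial>lborel) = ennreal (w n / Q)" for n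
  proof (cases "k \<le> n")
    case False
    thus ?thesis unfolding t_def w_def using c0[of n] by simp
  next
    case True
    have "(\<integral>\<^sup>+y. ennreal (t n y) \<partial>lborel)
        = (\<integral>\<^sup>+y. ennreal (\<beta> * c n) * ennreal (indicator {0<..<1} y * (y ^ (k - 1) * (1 - y) ^ (n - k))) \<partial>lborel)"
    proof (rule nn_integral_cong)
      fix y :: real
      show "ennreal (t n y) = ennreal (\<beta> * c n) * ennreal (indicator {0<..<1} y * (y ^ (k - 1) * (1 - y) ^ (n - k)))"
      proof (cases "y \<in> {0<..<1}")
        case True thus ?thesis unfolding t_def using b0 c_nn by (simp add: ennreal_mult)
      next
        case False thus ?thesis unfolding t_def by simp
      qed
    qed
    also have "\<dots> = ennreal (\<beta> * c n) * (\<integral>\<^sup>+y. ennreal (indicator {0<..<1} y * (y ^ (k - 1) * (1 - y) ^ (n - k))) \<partial>lborel)"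
      by (rule nn_integral_cmult) measurable
    also have "\<dots> = ennreal (\<beta> * c n) * ennreal (1 / (real k * real (n choose k)))"
      by (subst beta_nn[OF assms(10) True]) (rule refl)
    also have "\<dots> = ennreal (\<beta> * c n * (1 / (real k * real (n choose k))))"
    proof -
      have "0 \<le> \<beta> * c n" using b0 c_nn by simp
      moreover have "0 \<le> 1 / (real k * real (n choose k))" by simp
      ultimately show ?thesis by (rule ennreal_mult[symmetric])
    qed
    also have "\<beta> * c n * (1 / (real k * real (n choose k))) = w n / Q"
      unfolding \<beta>_def w_def using assms(10) True by (cases "Q = 0") (simp_all add: field_simps)
    finally show ?thesis .
  qed
  have wsm: "summable w" using numk_s by (simp add: sums_iff)
  have w0: "0 \<le> w n" for n unfolding w_def using c_nn by simp
  have "(\<integral>y. g y \<partial>mu k \<delta>) = enn2real (\<integral>\<^sup>+y. ennreal (g y) \<partial>mu k \<delta>)"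
    by (rule integral_eq_nn_integral) (use g_meas g_nn in \<open>auto simp: mu_eq\<close>)
  also have "(\<integral>\<^sup>+y. ennreal (g y) \<partial>mu k \<delta>) = (\<integral>\<^sup>+y. ennreal (\<rho> y) * ennreal (g y) \<partial>lborel)"
    unfolding mu_eq by (rule nn_integral_density) (use g_meas in \<open>auto simp: \<rho>_def\<close>)
  also have "\<dots> = (\<integral>\<^sup>+y. (\<Sum>n. ennreal (t n y)) \<partial>lborel)" by (simp add: pt)
  also have "\<dots> = (\<Sum>n. \<integral>\<^sup>+y. ennreal (t n y) \<partial>lborel)" by (rule nn_integral_suminf[OF tm])
  also have "\<dots> = (\<Sum>n. ennreal (w n / Q))" by (simp add: tint)
  also have "\<dots> = ennreal (suminf w / Q)"
  proof -
    have "(\<lambda>n. w n / Q) sums (suminf w / Q)" by (rule sums_divide[OF summable_sums[OF wsm]])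
    thus ?thesis using w0 Q0 by (subst suminf_ennreal2) (auto simp: sums_iff)
  qed
  finally have RHS: "(\<integral>y. g y \<partial>mu k \<delta>) = suminf w / Q"
    using suminf_nonneg[OF wsm w0] Q0 by simp
  have "(\<lambda>y. \<P>(z in bern_sample M H T y. sample_depths (\<lambda>i. H i (fst z)) T (snd z) = xs \<bar> card (snd z) = k)) = g"
    unfolding g_def by (rule refl)
  thus ?thesis unfolding LHS \<delta>_def[symmetric] using RHS unfolding Q_def by simp
qed
end
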